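(* In the full-information online setting for length-$\ell$ menus of lotteries over $m$ items with an arbitrary sequence of buyer valuations, running the weighted-majority algorithm (choose expert $k$ with probability proportional to $(1+\beta)^{\mathrm{Rev}_k/(mH)}$, $\mathrm{Rev}_k$ its cumulative revenue so far) over the finite set $\mathcal X$ of length-$\ell$ menus whose allocation probabilities lie in $\{0\}\cup\{(1-\alpha)^s: s\in\mathbb Z_{\ge0},(1-\alpha)^s\ge\alpha/(Hm)\}$ and whose prices are integer multiples of $\alpha$ in $[0,mH]$, with $\alpha=T^{-1}$, $\beta=T^{-1/2}$ (the discretization corresponding to $K=T^{1/2}$, $\delta=T^{-1/2}$), has regret $\tilde O(m^2H\ell\sqrt T)$.
   Context: A length-$\ell$ menu of lotteries over $m$ items consists of entries $(\vec\phi^{(j)},p^{(j)})$, $j=1,\dots,\ell$, with $\vec\phi^{(j)}\in[0,1]^m$ and $p^{(j)}\in[0,mH]$, plus the null entry $(\vec0,0)$. A buyer with item values $v(\vec e_i)\in[0,H]$ (additive or unit-demand; for unit-demand $\sum_i\phi^{(j)}[i]\le1$) selects an entry maximizing $\sum_i v(\vec e_i)\phi^{(j)}[i]-p^{(j)}$ and pays its price (the revenue $u_t$). In full information the learner observes $u_t$ on all menus after each round. Regret is $\mathbb E[\max_{\vec\rho}\sum_t u_t(\vec\rho)-\sum_t u_t(\vec\rho_t)]$ over all length-$\ell$ menus. *)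

theory Defs
  imports Complex_Main
begin

text \<open>A length-l menu over m items: entries j < l, allocation phi j i (item i < m)
  and price p j.  The null entry (0,0) is implicit.  Values outside the index
  ranges are forced to 0 so that menus have a canonical representation.\<close>

type_synonym menu = "(nat \<Rightarrow> nat \<Rightarrow> real) \<times> (nat \<Rightarrow> real)"

definition valid_menu :: "bool \<Rightarrow> nat \<Rightarrow> nat \<Rightarrow> real \<Rightarrow> menu \<Rightarrow> bool" where
  "valid_menu ud m l H M \<longleftrightarrow>
     (\<forall>j i. (j < l \<and> i < m \<longrightarrow> 0 \<le> fst M j i \<and> fst M j i \<le> 1)
          \<and> (\<not> (j < l \<and> i < m) \<longrightarrow> fst M j i = 0))
   \<and> (\<forall>j. (j < l \<longrightarrow> 0 \<le> snd M j \<and> snd M j \<le> real m * H) \<and> (l \<le> j \<longrightarrow> snd M j = 0))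
   \<and> (ud \<longrightarrow> (\<forall>j<l. (\<Sum>i<m. fst M j i) \<le> 1))"

definition entry_util :: "nat \<Rightarrow> (nat \<Rightarrow> real) \<Rightarrow> menu \<Rightarrow> nat \<Rightarrow> real" where
  "entry_util m v M j = (\<Sum>i<m. v i * fst M j i) - snd M j"

text \<open>Revenue: the buyer picks a utility-maximizing entry (null entry has utility 0
  and price 0); ties are broken in favour of the highest price.\<close>
definition revenue :: "nat \<Rightarrow> nat \<Rightarrow> (nat \<Rightarrow> real) \<Rightarrow> menu \<Rightarrow> real" where
  "revenue m l v M =
     (let best = Max (insert 0 (entry_util m v M ` {..<l}));
          C = {j \<in> {..<l}. entry_util m v M j = best}
      in if C = {} then 0 else Max (snd M ` C))"

definition alloc_grid :: "nat \<Rightarrow> real \<Rightarrow> real \<Rightarrow> real set" where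
  "alloc_grid m H \<alpha> = {0} \<union> {(1 - \<alpha>) ^ s | s. (1 - \<alpha>) ^ s \<ge> \<alpha> / (H * real m)}"

definition price_grid :: "nat \<Rightarrow> real \<Rightarrow> real \<Rightarrow> real set" where
  "price_grid m H \<alpha> = {real k * \<alpha> | k. real k * \<alpha> \<le> real m * H}"

definition disc_menus :: "bool \<Rightarrow> nat \<Rightarrow> nat \<Rightarrow> real \<Rightarrow> real \<Rightarrow> menu set" where
  "disc_menus ud m l H \<alpha> =
     {M. valid_menu ud m l H M
       \<and> (\<forall>j<l. \<forall>i<m. fst M j i \<in> alloc_grid m H \<alpha>)
       \<and> (\<forall>j<l. snd M j \<in> price_grid m H \<alpha>)}"

definition cum_rev :: "nat \<Rightarrow> nat \<Rightarrow> (nat \<Rightarrow> nat \<Rightarrow> real) \<Rightarrow> nat \<Rightarrow> menu \<Rightarrow> real" where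
  "cum_rev m l vs t M = (\<Sum>s<t. revenue m l (vs s) M)"

definition wm_weight :: "nat \<Rightarrow> nat \<Rightarrow> real \<Rightarrow> real \<Rightarrow> (nat \<Rightarrow> nat \<Rightarrow> real) \<Rightarrow> nat \<Rightarrow> menu \<Rightarrow> real" where
  "wm_weight m l H \<beta> vs t M = (1 + \<beta>) powr (cum_rev m l vs t M / (real m * H))"

definition wm_prob :: "menu set \<Rightarrow> nat \<Rightarrow> nat \<Rightarrow> real \<Rightarrow> real \<Rightarrow> (nat \<Rightarrow> nat \<Rightarrow> real) \<Rightarrow> nat \<Rightarrow> menu \<Rightarrow> real" where
  "wm_prob X m l H \<beta> vs t M =
     wm_weight m l H \<beta> vs t M / (\<Sum>M'\<in>X. wm_weight m l H \<beta> vs t M')"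

definition wm_expected_revenue ::
  "menu set \<Rightarrow> nat \<Rightarrow> nat \<Rightarrow> real \<Rightarrow> real \<Rightarrow> (nat \<Rightarrow> nat \<Rightarrow> real) \<Rightarrow> nat \<Rightarrow> real" where
  "wm_expected_revenue X m l H \<beta> vs T =
     (\<Sum>t<T. \<Sum>M\<in>X. wm_prob X m l H \<beta> vs t M * revenue m l (vs t) M)"

definition opt_revenue :: "bool \<Rightarrow> nat \<Rightarrow> nat \<Rightarrow> real \<Rightarrow> (nat \<Rightarrow> nat \<Rightarrow> real) \<Rightarrow> nat \<Rightarrow> real" where
  "opt_revenue ud m l H vs T =
     (SUP M \<in> {M. valid_menu ud m l H M}. \<Sum>t<T. revenue m l (vs t) M)"

definition wm_regret :: "bool \<Rightarrow> nat \<Rightarrow> nat \<Rightarrow> real \<Rightarrow> (nat \<Rightarrow> nat \<Rightarrow> real) \<Rightarrow> nat \<Rightarrow> real" where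
  "wm_regret ud m l H vs T =
     (let \<alpha> = 1 / real T; \<beta> = 1 / sqrt (real T)
      in opt_revenue ud m l H vs T
         - wm_expected_revenue (disc_menus ud m l H \<alpha>) m l H \<beta> vs T)"

end

theory Submission
  imports Defs "HOL-Analysis.Convex" "HOL-Library.FuncSet"
begin


lemma powr_bern:
  fixes b x :: real assumes "0 \<le> b" "0 \<le> x" "x \<le> 1"
  shows "(1 + b) powr x \<le> 1 + b * x"
proof -
  have "exp ((1 - x) *\<^sub>R 0 + x *\<^sub>R ln (1 + b)) \<le> (1 - x) * exp 0 + x * exp (ln (1 + b))"
    by (rule convex_onD[OF exp_convex]) (use assms in auto)
  moreover have "(1 + b) powr x = exp ((1 - x) *\<^sub>R 0 + x *\<^sub>R ln (1 + b))"
    using assms by (simp add: powr_def mult.commute)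
  ultimately show ?thesis using assms by (simp add: algebra_simps)
qed

lemma wm_bound:
  fixes X :: "'a set" and g :: "nat \<Rightarrow> 'a \<Rightarrow> real" and b :: real
  assumes fin: "finite X" and M0: "M0 \<in> X"
    and g: "\<And>t M. t < T \<Longrightarrow> M \<in> X \<Longrightarrow> 0 \<le> g t M \<and> g t M \<le> 1"
    and b: "0 < b" "b \<le> 1"
  defines "w \<equiv> \<lambda>t M. (1 + b) powr (\<Sum>s<t. g s M)"
  defines "W \<equiv> \<lambda>t. \<Sum>M\<in>X. w t M"
  shows "(\<Sum>t<T. g t M0) \<le> (\<Sum>t<T. \<Sum>M\<in>X. w t M / W t * g t M) + b * T + ln (card X) / b"
proof -
  have wpos: "w t M > 0" for t M using b unfolding w_def by simp
  have Wpos: "W t > 0" for t unfolding W_def using fin M0 wpos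
    by (intro sum_pos) auto
  define E where "E t = (\<Sum>M\<in>X. w t M / W t * g t M)" for t
  have step: "W (Suc t) \<le> W t * exp (b * E t)" if "t < T" for t
  proof -
    have "W (Suc t) = (\<Sum>M\<in>X. w t M * (1 + b) powr g t M)"
      unfolding W_def w_def using b by (simp add: powr_add)
    also have "\<dots> \<le> (\<Sum>M\<in>X. w t M * (1 + b * g t M))"
      by (intro sum_mono mult_left_mono powr_bern) (use b g that wpos in \<open>auto intro: less_imp_le\<close>)
    also have "\<dots> = W t * (1 + b * E t)"
    proof -
      have "W t * E t = (\<Sum>M\<in>X. w t M * g t M)"
        unfolding E_def sum_distrib_left using Wpos[of t] by (intro sum.cong) auto
      thus ?thesis unfolding W_def
        by (simp add: algebra_simps sum.distrib sum_distrib_left[symmetric] sum_distrib_right[symmetric])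
    qed
    also have "\<dots> \<le> W t * exp (b * E t)"
      using Wpos[of t] by (intro mult_left_mono) (auto simp: less_imp_le)
    finally show ?thesis .
  qed
  have iter: "W t \<le> W 0 * exp (b * (\<Sum>s<t. E s))" if "t \<le> T" for t
    using that
  proof (induction t)
    case 0 then show ?case by simp
  next
    case (Suc t)
    have "W (Suc t) \<le> W t * exp (b * E t)" using step Suc by simp
    also have "\<dots> \<le> W 0 * exp (b * (\<Sum>s<t. E s)) * exp (b * E t)"
      using Suc by (intro mult_right_mono) auto
    also have "\<dots> = W 0 * exp (b * (\<Sum>s<Suc t. E s))"
      by (simp add: algebra_simps exp_add)
    finally show ?case .
  qed
  have W0: "W 0 = card X" unfolding W_def w_def using b by simp
  have "w T M0 \<le> W T" unfolding W_def
    using fin M0 wpos by (intro member_le_sum) (auto simp: less_imp_le)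
  also have "\<dots> \<le> card X * exp (b * (\<Sum>s<T. E s))" using iter[of T] W0 by simp
  finally have le: "w T M0 \<le> card X * exp (b * (\<Sum>s<T. E s))" .
  have cX: "card X > 0" using fin M0 card_gt_0_iff by blast
  define G where "G = (\<Sum>t<T. g t M0)"
  have "ln (w T M0) \<le> ln (card X * exp (b * (\<Sum>s<T. E s)))"
    using le wpos by (subst ln_le_cancel_iff) (use cX in auto)
  hence "G * ln (1 + b) \<le> ln (card X) + b * (\<Sum>s<T. E s)"
    using b cX by (simp add: w_def G_def ln_powr ln_mult)
  moreover have "b - b^2 \<le> ln (1 + b)" using b by (intro ln_one_plus_pos_lower_bound) auto
  moreover have G0: "0 \<le> G" "G \<le> T" unfolding G_def using g M0
    using sum_mono[of "{..<T}" "\<lambda>t. g t M0" "\<lambda>_. 1"] by (auto intro: sum_nonneg)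
  ultimately have "G * (b - b^2) \<le> ln (card X) + b * (\<Sum>s<T. E s)"
    by (meson mult_left_mono order_trans)
  moreover have "G * b^2 \<le> T * b^2" using G0 by (intro mult_right_mono) auto
  ultimately have "b * G \<le> ln (card X) + b * (\<Sum>s<T. E s) + b * (b * T)"
    by (simp add: algebra_simps power2_eq_square)
  hence "b * G \<le> b * (ln (card X) / b + (\<Sum>s<T. E s) + b * T)"
    using b by (simp add: algebra_simps)
  hence "G \<le> ln (card X) / b + (\<Sum>s<T. E s) + b * T" using b by simp
  thus ?thesis unfolding G_def E_def by simp
qed



lemma valid_outside:
  assumes "valid_menu ud m l H M" "l \<le> j"
  shows "snd M j = 0" "\<And>i. fst M j i = 0"
  using assms unfolding valid_menu_def by auto

lemma util_null:
  assumes "valid_menu ud m l H M"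
  shows "entry_util m v M l = 0"
  using valid_outside[OF assms] unfolding entry_util_def by simp

lemma rev_char:
  assumes V: "valid_menu ud m l H M"
  shows "\<exists>j\<le>l. revenue m l v M = snd M j \<and> (\<forall>j'\<le>l. entry_util m v M j' \<le> entry_util m v M j)"
proof -
  define u where "u = entry_util m v M"
  define best where "best = Max (insert 0 (u ` {..<l}))"
  define C where "C = {j \<in> {..<l}. u j = best}"
  have rev: "revenue m l v M = (if C = {} then 0 else Max (snd M ` C))"
    unfolding revenue_def Let_def C_def best_def u_def by simp
  have ge: "u j \<le> best" if "j < l" for j unfolding best_def using that by (intro Max_ge) auto
  have ge0: "0 \<le> best" unfolding best_def by (intro Max_ge) auto
  have bin: "best \<in> insert 0 (u ` {..<l})" unfolding best_def by (intro Max_in) auto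
  have ul: "u l = 0" unfolding u_def by (rule util_null[OF V])
  show ?thesis
  proof (cases "C = {}")
    case True
    have "best = 0" using bin True unfolding C_def by auto
    hence "\<forall>j'\<le>l. u j' \<le> u l" using ge ul by (metis le_less order_refl)
    moreover have "revenue m l v M = snd M l" using True rev valid_outside[OF V] by simp
    ultimately show ?thesis unfolding u_def by blast
  next
    case False
    have fC: "finite C" unfolding C_def by auto
    have "Max (snd M ` C) \<in> snd M ` C" using fC False by (intro Max_in) auto
    then obtain j where j: "j \<in> C" "Max (snd M ` C) = snd M j" by auto
    have "\<forall>j'\<le>l. u j' \<le> u j"
    proof (intro allI impI)
      fix j' assume "j' \<le> l"
      then consider "j' < l" | "j' = l" by linarith
      thus "u j' \<le> u j" using ge ge0 ul j(1) unfolding C_def by cases auto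
    qed
    moreover have "j \<le> l" using j C_def by auto
    ultimately show ?thesis using rev False j unfolding u_def by auto
  qed
qed

lemma rev_bounds:
  assumes V: "valid_menu ud m l H M" and H: "0 \<le> H"
  shows "0 \<le> revenue m l v M" "revenue m l v M \<le> real m * H"
proof -
  obtain j where j: "j \<le> l" "revenue m l v M = snd M j" using rev_char[OF V] by blast
  have "0 \<le> snd M j \<and> snd M j \<le> real m * H"
  proof (cases "j < l")
    case True then show ?thesis using V unfolding valid_menu_def by auto
  next
    case False then show ?thesis using valid_outside[OF V, of j] H by auto
  qed
  thus "0 \<le> revenue m l v M" "revenue m l v M \<le> real m * H" using j by auto
qed



lemma round_alloc:
  fixes \<phi> H \<alpha> :: real
  assumes phi: "0 \<le> \<phi>" "\<phi> \<le> 1" and T: "T \<ge> 1" and a: "\<alpha> = 1 / real T"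
    and H: "H \<ge> 1" and m: "m \<ge> 1"
  shows "\<exists>\<phi>'\<in>alloc_grid m H \<alpha>. 0 \<le> \<phi>' \<and> \<phi>' \<le> \<phi> \<and> \<phi> - \<phi>' \<le> \<alpha> + 2 * \<alpha> / (H * real m)
           \<and> (\<phi> = 0 \<longrightarrow> \<phi>' = 0)"
proof -
  define c where "c = \<alpha> / (H * real m)"
  have m1: "1 \<le> real m" using m by simp
  have hm: "H * real m \<ge> 1" using mult_mono[OF H m1] H by simp
  have a0: "0 < \<alpha>" "\<alpha> \<le> 1" using a T by auto
  have c0: "0 < c" using a0 hm unfolding c_def by auto
  have c2: "2 * \<alpha> / (H * real m) = 2 * c" unfolding c_def by simp
  have zero: "0 \<in> alloc_grid m H \<alpha>" unfolding alloc_grid_def by auto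
  show ?thesis
  proof (cases "\<phi> = 0 \<or> T = 1")
    case True
    then show ?thesis
    proof
      assume "\<phi> = 0" thus ?thesis using zero a0 c0 by (intro bexI[of _ 0]) (auto simp: c2)
    next
      assume "T = 1"
      hence "\<alpha> = 1" using a by simp
      thus ?thesis using zero phi c0 c2 by (intro bexI[of _ 0]) auto
    qed
  next
    case False
    hence p: "0 < \<phi>" and T2: "T \<ge> 2" using phi T by auto
    have "real T \<ge> 2" using T2 by simp
    hence "1 / real T \<le> 1/2" by (intro divide_left_mono) auto
    hence ah: "\<alpha> \<le> 1/2" using a by simp
    have "\<exists>s. (1 - \<alpha>) ^ s < \<phi>" using p a0 by (intro real_arch_pow_inv) auto
    hence ex: "\<exists>s. (1 - \<alpha>) ^ s \<le> \<phi>" by (auto intro: less_imp_le)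
    define s where "s = (LEAST s. (1 - \<alpha>) ^ s \<le> \<phi>)"
    have s1: "(1 - \<alpha>) ^ s \<le> \<phi>" unfolding s_def using LeastI_ex[OF ex] .
    have s2: "\<phi> - \<phi> * \<alpha> \<le> (1 - \<alpha>) ^ s"
    proof (cases s)
      case 0 then show ?thesis using s1 phi a0 by (simp add: mult_nonneg_nonneg)
    next
      case (Suc k)
      have "\<not> (1 - \<alpha>) ^ k \<le> \<phi>" using not_less_Least[of k "\<lambda>s. (1 - \<alpha>) ^ s \<le> \<phi>"] Suc unfolding s_def by simp
      hence "\<phi> * (1 - \<alpha>) \<le> (1 - \<alpha>) ^ k * (1 - \<alpha>)" using a0 by (intro mult_right_mono) auto
      thus ?thesis using Suc by (simp add: algebra_simps)
    qed
    show ?thesis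
    proof (cases "(1 - \<alpha>) ^ s \<ge> c")
      case True
      have "(1 - \<alpha>) ^ s \<in> alloc_grid m H \<alpha>" unfolding alloc_grid_def using True c_def by auto
      moreover have "\<phi> * \<alpha> \<le> \<alpha>" using phi a0 by (simp add: mult_left_le_one_le)
      moreover have "0 \<le> c" using c0 by simp
      ultimately have e: "\<phi> - (1 - \<alpha>) ^ s \<le> \<alpha> + 2 * \<alpha> / (H * real m)" using s2 c2 by linarith
      have "0 \<le> (1 - \<alpha>) ^ s" using a0 by simp
      thus ?thesis using s1 e p \<open>(1 - \<alpha>) ^ s \<in> alloc_grid m H \<alpha>\<close>
        by (intro bexI[of _ "(1 - \<alpha>) ^ s"]) auto
    next
      case False
      have "\<phi> \<le> 2 * c"
      proof -
        have "\<phi> * (1 - \<alpha>) \<le> c" using s2 False by (simp add: algebra_simps)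
        moreover have "\<phi> * \<alpha> \<le> \<phi> * (1/2)" using ah p by (intro mult_left_mono) auto
        hence "\<phi> / 2 \<le> \<phi> * (1 - \<alpha>)" by (simp add: algebra_simps)
        ultimately show ?thesis by simp
      qed
      thus ?thesis using zero a0 p by (intro bexI[of _ 0]) (auto simp: c2)
    qed
  qed
qed



lemma disc_exists:
  fixes H :: real
  assumes V: "valid_menu ud m l H M" and T: "T \<ge> 1" and H: "H \<ge> 1" and m: "m \<ge> 1"
  shows "\<exists>M'\<in>disc_menus ud m l H (1 / real T). \<forall>v. (\<forall>i<m. 0 \<le> v i \<and> v i \<le> H) \<longrightarrow>
           revenue m l v M \<le> revenue m l v M' + 6 * real m * H / sqrt (real T)"
proof -
  define \<alpha> where "\<alpha> = 1 / real T"
  define \<delta> where "\<delta> = 1 / sqrt (real T)"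
  define P where "P = (\<lambda>\<phi> \<phi>'. \<phi>'\<in>alloc_grid m H \<alpha> \<and> 0 \<le> \<phi>' \<and> \<phi>' \<le> \<phi> \<and> \<phi> - \<phi>' \<le> \<alpha> + 2 * \<alpha> / (H * real m)
           \<and> (\<phi> = 0 \<longrightarrow> \<phi>' = 0))"
  define rd where "rd = (\<lambda>\<phi>. SOME \<phi>'. P \<phi> \<phi>')"
  have rdP: "P \<phi> (rd \<phi>)" if "0 \<le> \<phi>" "\<phi> \<le> 1" for \<phi>
  proof -
    have "\<exists>\<phi>'. P \<phi> \<phi>'" using round_alloc[OF that T \<alpha>_def H m] unfolding P_def by blast
    thus ?thesis unfolding rd_def by (rule someI_ex)
  qed
  define fl where "fl = (\<lambda>x::real. real (nat \<lfloor>x * real T\<rfloor>) * \<alpha>)"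
  have Tpos: "real T > 0" using T by simp
  have fl: "fl x \<le> x" "x - \<alpha> \<le> fl x" "0 \<le> fl x" if "0 \<le> x" for x
  proof -
    have e: "fl x = real_of_int \<lfloor>x * real T\<rfloor> / real T" unfolding fl_def \<alpha>_def using that Tpos by simp
    have "real_of_int \<lfloor>x * real T\<rfloor> \<le> x * real T" by simp
    thus "fl x \<le> x" using e Tpos by (simp add: divide_le_eq)
    have "x * real T - 1 \<le> real_of_int \<lfloor>x * real T\<rfloor>" by linarith
    hence "(x * real T - 1) / real T \<le> fl x" using e Tpos by (simp add: divide_right_mono)
    thus "x - \<alpha> \<le> fl x" using Tpos unfolding \<alpha>_def by (simp add: diff_divide_distrib)
    show "0 \<le> fl x" unfolding fl_def \<alpha>_def by simp
  qed
  have fl0: "fl 0 = 0" unfolding fl_def by simp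
  have sT: "sqrt (real T) \<ge> 1" using T by simp
  have d0: "0 < \<delta>" "\<delta> \<le> 1" unfolding \<delta>_def using sT by auto
  have a0: "0 < \<alpha>" "\<alpha> \<le> 1" unfolding \<alpha>_def using T by auto
  define M' where "M' = ((\<lambda>j i. rd (fst M j i)), (\<lambda>j. fl ((1 - \<delta>) * snd M j)))"
  have phi01: "0 \<le> fst M j i \<and> fst M j i \<le> 1" for j i
    using V unfolding valid_menu_def by (cases "j < l \<and> i < m") auto
  have p0: "0 \<le> snd M j \<and> snd M j \<le> real m * H" for j
    using V H unfolding valid_menu_def by (cases "j < l") auto
  have rdP': "P (fst M j i) (rd (fst M j i))" for j i using rdP phi01 by auto
  have pM': "snd M' j \<le> (1 - \<delta>) * snd M j" "(1 - \<delta>) * snd M j - \<alpha> \<le> snd M' j" "0 \<le> snd M' j" for j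
    using fl[of "(1 - \<delta>) * snd M j"] p0[of j] d0 unfolding M'_def by auto
  have pM'2: "snd M' j \<le> real m * H" for j
    using pM'(1)[of j] p0[of j] d0 mult_left_le_one_le[of "snd M j" "1 - \<delta>"] by auto
  have VM': "valid_menu ud m l H M'"
    unfolding valid_menu_def
  proof (intro conjI allI)
    fix j i
    show "j < l \<and> i < m \<longrightarrow> 0 \<le> fst M' j i \<and> fst M' j i \<le> 1"
      using rdP'[of j i] phi01[of j i] unfolding M'_def P_def by auto
    show "\<not> (j < l \<and> i < m) \<longrightarrow> fst M' j i = 0"
      using rdP'[of j i] V unfolding M'_def P_def valid_menu_def by auto
  next
    fix j
    show "j < l \<longrightarrow> 0 \<le> snd M' j \<and> snd M' j \<le> real m * H" using pM' pM'2 by auto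
    show "l \<le> j \<longrightarrow> snd M' j = 0" using valid_outside[OF V, of j] fl0 unfolding M'_def by auto
  next
    show "ud \<longrightarrow> (\<forall>j<l. (\<Sum>i<m. fst M' j i) \<le> 1)"
    proof (intro impI allI)
      fix j assume ud: ud and j: "j < l"
      have "(\<Sum>i<m. fst M' j i) \<le> (\<Sum>i<m. fst M j i)"
        using rdP' unfolding M'_def P_def by (intro sum_mono) auto
      also have "\<dots> \<le> 1" using V ud j unfolding valid_menu_def by auto
      finally show "(\<Sum>i<m. fst M' j i) \<le> 1" .
    qed
  qed
  have inD: "M' \<in> disc_menus ud m l H \<alpha>"
    unfolding disc_menus_def
  proof (intro CollectI conjI allI impI VM')
    fix j i assume "j < l" "i < m"
    show "fst M' j i \<in> alloc_grid m H \<alpha>" using rdP'[of j i] unfolding M'_def P_def by auto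
  next
    fix j assume "j < l"
    show "snd M' j \<in> price_grid m H \<alpha>"
      unfolding price_grid_def using pM'2[of j] unfolding M'_def fl_def by auto
  qed
  define \<epsilon> where "\<epsilon> = real m * H * \<alpha> + 2 * \<alpha>"
  have main: "revenue m l v M \<le> revenue m l v M' + 6 * real m * H / sqrt (real T)"
    if v: "\<forall>i<m. 0 \<le> v i \<and> v i \<le> H" for v
  proof -
    define S where "S j = (\<Sum>i<m. v i * fst M j i)" for j
    define S' where "S' j = (\<Sum>i<m. v i * fst M' j i)" for j
    have SS: "0 \<le> S j - S' j \<and> S j - S' j \<le> \<epsilon>" for j
    proof -
      have eq: "S j - S' j = (\<Sum>i<m. v i * (fst M j i - fst M' j i))"
        unfolding S_def S'_def by (simp add: sum_subtractf algebra_simps)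
      have "0 \<le> (\<Sum>i<m. v i * (fst M j i - fst M' j i))"
        using v rdP' unfolding M'_def P_def by (intro sum_nonneg mult_nonneg_nonneg) auto
      moreover have "(\<Sum>i<m. v i * (fst M j i - fst M' j i)) \<le> (\<Sum>i<m. H * (\<alpha> + 2 * \<alpha> / (H * real m)))"
      proof (intro sum_mono)
        fix i assume i: "i \<in> {..<m}"
        have d: "0 \<le> fst M j i - fst M' j i" "fst M j i - fst M' j i \<le> \<alpha> + 2 * \<alpha> / (H * real m)"
          using rdP'[of j i] unfolding M'_def P_def by auto
        show "v i * (fst M j i - fst M' j i) \<le> H * (\<alpha> + 2 * \<alpha> / (H * real m))"
          using v i d by (intro mult_mono) auto
      qed
      moreover have "(\<Sum>i<m. H * (\<alpha> + 2 * \<alpha> / (H * real m))) = \<epsilon>"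
        using m H unfolding \<epsilon>_def by (simp add: algebra_simps)
      ultimately show ?thesis using eq by simp
    qed
    have uM: "entry_util m v M j = S j - snd M j" for j unfolding entry_util_def S_def by simp
    have uM': "entry_util m v M' j = S' j - snd M' j" for j unfolding entry_util_def S'_def by simp
    obtain a where a: "a \<le> l" "revenue m l v M = snd M a" "\<forall>j'\<le>l. entry_util m v M j' \<le> entry_util m v M a"
      using rev_char[OF V] by blast
    obtain b where b: "b \<le> l" "revenue m l v M' = snd M' b" "\<forall>j'\<le>l. entry_util m v M' j' \<le> entry_util m v M' b"
      using rev_char[OF VM'] by blast
    have u1: "S b - snd M b \<le> S a - snd M a" using a(3) b(1) uM by metis
    have u2: "S' a - snd M' a \<le> S' b - snd M' b" using b(3) a(1) uM' by metis
    have k1: "\<delta> * snd M a - \<epsilon> - \<alpha> \<le> \<delta> * snd M b"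
      using u1 u2 SS[of a] SS[of b] pM'(1)[of a] pM'(2)[of b] by (simp add: algebra_simps)
    have k2: "\<delta> * snd M b \<le> \<delta> * (real m * H)" using p0[of b] d0 by (intro mult_left_mono) auto
    have k3: "snd M b - \<delta> * snd M b - \<alpha> \<le> snd M' b" using pM'(2)[of b] by (simp add: algebra_simps)
    have "snd M a - (\<epsilon> + \<alpha>) / \<delta> \<le> snd M b"
    proof -
      have "\<delta> * (snd M a - (\<epsilon> + \<alpha>) / \<delta>) = \<delta> * snd M a - \<epsilon> - \<alpha>" using d0 by (simp add: field_simps)
      hence "\<delta> * (snd M a - (\<epsilon> + \<alpha>) / \<delta>) \<le> \<delta> * snd M b" using k1 by simp
      thus ?thesis using d0 by simp
    qed
    hence key: "revenue m l v M \<le> revenue m l v M' + ((\<epsilon> + \<alpha>) / \<delta> + \<delta> * (real m * H) + \<alpha>)"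
      using a(2) b(2) k2 k3 by simp
    define s where "s = sqrt (real T)"
    have s1: "s \<ge> 1" using sT s_def by simp
    have Ts: "real T = s^2" unfolding s_def by simp
    have "(\<epsilon> + \<alpha>) / \<delta> = (real m * H + 3) / s"
      unfolding \<epsilon>_def \<alpha>_def \<delta>_def s_def[symmetric] Ts using s1
      by (simp add: field_simps power2_eq_square)
    moreover have "\<delta> * (real m * H) = real m * H / s" unfolding \<delta>_def s_def by simp
    moreover have "\<alpha> \<le> 1 / s" unfolding \<alpha>_def Ts using s1
      by (simp add: field_simps power2_eq_square)
    moreover have "1 \<le> real m * H"
    proof -
      have "1 \<le> real m" using m by simp
      from mult_mono[OF this H] show ?thesis by simp
    qed
    moreover have "(real m * H + 3) / s + real m * H / s + 1 / s = (2 * (real m * H) + 4) / s"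
      by (simp add: add_divide_distrib[symmetric])
    moreover have "(2 * (real m * H) + 4) / s \<le> (6 * real m * H) / s"
      using \<open>1 \<le> real m * H\<close> s1 by (intro divide_right_mono) (auto simp: mult.commute)
    ultimately have "(\<epsilon> + \<alpha>) / \<delta> + \<delta> * (real m * H) + \<alpha> \<le> 6 * real m * H / s"
      by linarith
    thus ?thesis using key unfolding s_def by linarith
  qed
  show ?thesis using inD main unfolding \<alpha>_def by blast
qed



lemma disc_card:
  assumes fA: "finite (alloc_grid m H \<alpha>)" and fP: "finite (price_grid m H \<alpha>)"
  shows "finite (disc_menus ud m l H \<alpha>)"
    "card (disc_menus ud m l H \<alpha>) \<le> card (alloc_grid m H \<alpha>) ^ (l * m) * card (price_grid m H \<alpha>) ^ l"
proof -
  define A where "A = alloc_grid m H \<alpha>"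
  define P where "P = price_grid m H \<alpha>"
  define S where "S = (PiE ({..<l} \<times> {..<m}) (\<lambda>_. A)) \<times> (PiE {..<l} (\<lambda>_. P))"
  define g :: "((nat \<times> nat \<Rightarrow> real) \<times> (nat \<Rightarrow> real)) \<Rightarrow> menu"
    where "g = (\<lambda>(f, p). ((\<lambda>j i. if j < l \<and> i < m then f (j, i) else 0), (\<lambda>j. if j < l then p j else 0)))"
  have sub: "disc_menus ud m l H \<alpha> \<subseteq> g ` S"
  proof
    fix M assume M: "M \<in> disc_menus ud m l H \<alpha>"
    hence V: "valid_menu ud m l H M" unfolding disc_menus_def by auto
    define f where "f = restrict (\<lambda>(j, i). fst M j i) ({..<l} \<times> {..<m})"
    define p where "p = restrict (snd M) {..<l}"
    have "(f, p) \<in> S" using M unfolding S_def f_def p_def disc_menus_def A_def P_def by auto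
    moreover have "g (f, p) = M"
    proof -
      have "fst (g (f, p)) = fst M"
        using V unfolding g_def f_def valid_menu_def by (auto intro!: ext)
      moreover have "snd (g (f, p)) = snd M"
        using V unfolding g_def p_def valid_menu_def by (auto intro!: ext)
      ultimately show ?thesis by (simp add: prod_eq_iff)
    qed
    ultimately show "M \<in> g ` S" by (metis image_eqI)
  qed
  have fS: "finite S" unfolding S_def using fA fP A_def P_def by (auto intro!: finite_PiE)
  show "finite (disc_menus ud m l H \<alpha>)" using sub fS finite_subset by blast
  have "card (disc_menus ud m l H \<alpha>) \<le> card (g ` S)" using sub fS by (intro card_mono) auto
  also have "\<dots> \<le> card S" using fS by (rule card_image_le)
  also have "card S = card A ^ (l * m) * card P ^ l"
    unfolding S_def by (simp add: card_cartesian_product card_PiE)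
  finally show "card (disc_menus ud m l H \<alpha>) \<le> card (alloc_grid m H \<alpha>) ^ (l * m) * card (price_grid m H \<alpha>) ^ l"
    unfolding A_def P_def .
qed

lemma price_card:
  assumes T: "T \<ge> 1" and a: "\<alpha> = 1 / real T" and mH: "0 \<le> real m * H"
  shows "finite (price_grid m H \<alpha>)" "real (card (price_grid m H \<alpha>)) \<le> real m * H * real T + 1"
proof -
  define N where "N = nat \<lfloor>real m * H * real T\<rfloor>"
  have Tp: "real T > 0" using T by simp
  have sub: "price_grid m H \<alpha> \<subseteq> (\<lambda>k. real k * \<alpha>) ` {..N}"
  proof
    fix x assume "x \<in> price_grid m H \<alpha>"
    then obtain k where k: "x = real k * \<alpha>" "real k * \<alpha> \<le> real m * H" unfolding price_grid_def by auto
    have "real k \<le> real m * H * real T" using k(2) a Tp by (simp add: field_simps)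
    hence "k \<le> N" unfolding N_def by linarith
    thus "x \<in> (\<lambda>k. real k * \<alpha>) ` {..N}" using k by auto
  qed
  show "finite (price_grid m H \<alpha>)" using sub finite_subset by blast
  have "card (price_grid m H \<alpha>) \<le> card ((\<lambda>k. real k * \<alpha>) ` {..N})" using sub by (intro card_mono) auto
  also have "\<dots> \<le> card {..N}" by (rule card_image_le) auto
  finally have "card (price_grid m H \<alpha>) \<le> N + 1" by simp
  hence "real (card (price_grid m H \<alpha>)) \<le> real N + 1" by linarith
  moreover have "real N \<le> real m * H * real T" unfolding N_def using mH Tp by simp
  ultimately show "real (card (price_grid m H \<alpha>)) \<le> real m * H * real T + 1" by linarith
qed

lemma alloc_card:
  assumes T: "T \<ge> 1" and a: "\<alpha> = 1 / real T" and H: "H \<ge> 1" and m: "m \<ge> 1"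
  shows "finite (alloc_grid m H \<alpha>)" "real (card (alloc_grid m H \<alpha>)) \<le> real T ^ 2 * H * real m + 2"
proof -
  have m1: "1 \<le> real m" using m by simp
  have hm: "H * real m \<ge> 1" using mult_mono[OF H m1] H by simp
  have Tp: "real T \<ge> 1" using T by simp
  define c where "c = \<alpha> / (H * real m)"
  define N where "N = nat \<lfloor>real T ^ 2 * H * real m\<rfloor>"
  have cpos: "c > 0" unfolding c_def a using hm Tp by simp
  have ic: "1 / c = real T * H * real m" unfolding c_def a using hm Tp by simp
  have bnd: "s \<le> N" if s: "(1 - \<alpha>) ^ s \<ge> c" for s
  proof -
    have "(1 - \<alpha>) \<le> exp (- \<alpha>)" using exp_ge_add_one_self[of "-\<alpha>"] by simp
    hence "(1 - \<alpha>) ^ s \<le> exp (- \<alpha>) ^ s" using a Tp by (intro power_mono) auto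
    also have "\<dots> = exp (- (\<alpha> * real s))" by (simp add: exp_of_nat_mult[symmetric] mult.commute)
    finally have "c \<le> exp (- (\<alpha> * real s))" using s by simp
    hence "ln c \<le> ln (exp (- (\<alpha> * real s)))" using cpos by (subst ln_le_cancel_iff) auto
    hence "ln c \<le> - (\<alpha> * real s)" by simp
    hence "\<alpha> * real s \<le> ln (1 / c)" using cpos by (simp add: ln_div)
    also have "\<dots> \<le> 1 / c" using cpos by (intro ln_le_minus_one[THEN order_trans]) auto
    finally have "real s / real T \<le> real T * H * real m" using ic a by simp
    hence "real s \<le> real T * (real T * H * real m)" using Tp by (simp add: divide_le_eq mult.commute)
    hence "real s \<le> real T ^ 2 * H * real m" by (simp add: power2_eq_square algebra_simps)
    thus "s \<le> N" unfolding N_def by linarith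
  qed
  have sub: "alloc_grid m H \<alpha> \<subseteq> insert 0 ((\<lambda>s. (1 - \<alpha>) ^ s) ` {..N})"
    unfolding alloc_grid_def using bnd c_def by auto
  show "finite (alloc_grid m H \<alpha>)" using sub finite_subset by blast
  have "card (alloc_grid m H \<alpha>) \<le> card (insert 0 ((\<lambda>s. (1 - \<alpha>) ^ s) ` {..N}))" using sub by (intro card_mono) auto
  also have "\<dots> \<le> Suc (card ((\<lambda>s. (1 - \<alpha>) ^ s) ` {..N}))" by (rule card_insert_le_m1) auto
  also have "\<dots> \<le> Suc (card {..N})" using card_image_le[of "{..N}" "\<lambda>s. (1 - \<alpha>) ^ s"] by simp
  finally have "card (alloc_grid m H \<alpha>) \<le> N + 2" by simp
  hence "real (card (alloc_grid m H \<alpha>)) \<le> real N + 2" by linarith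
  moreover have "real N \<le> real T ^ 2 * H * real m" unfolding N_def using H by simp
  ultimately show "real (card (alloc_grid m H \<alpha>)) \<le> real T ^ 2 * H * real m + 2" by linarith
qed



theorem mainTheorem15:
  "\<exists>C (k::nat). \<forall>(ud::bool) (m::nat) (l::nat) (H::real) (T::nat) (vs::nat \<Rightarrow> nat \<Rightarrow> real).
     m \<ge> 1 \<longrightarrow> l \<ge> 1 \<longrightarrow> H \<ge> 1 \<longrightarrow> T \<ge> 1 \<longrightarrow>
     (\<forall>t<T. \<forall>i<m. 0 \<le> vs t i \<and> vs t i \<le> H) \<longrightarrow>
     wm_regret ud m l H vs T
       \<le> C * real m ^ 2 * H * real l * sqrt (real T)
           * (1 + ln (real m * H * real l * real T)) ^ k"
proof (intro exI allI impI)
  fix ud :: bool and m l :: nat and H :: real and T :: nat and vs :: "nat \<Rightarrow> nat \<Rightarrow> real"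
  assume m: "m \<ge> 1" and l: "l \<ge> 1" and H: "H \<ge> 1" and T: "T \<ge> 1"
    and vs: "\<forall>t<T. \<forall>i<m. 0 \<le> vs t i \<and> vs t i \<le> H"
  define \<alpha> where "\<alpha> = 1 / real T"
  define \<beta> where "\<beta> = 1 / sqrt (real T)"
  define X where "X = disc_menus ud m l H \<alpha>"
  define R where "R M = (\<Sum>t<T. revenue m l (vs t) M)" for M
  define L where "L = ln (real m * H * real l * real T)"
  define s where "s = sqrt (real T)"
  have m1: "1 \<le> real m" using m by simp
  have l1: "1 \<le> real l" using l by simp
  have T1: "1 \<le> real T" using T by simp
  have mH: "1 \<le> real m * H" using mult_mono[OF m1 H] H by simp
  have s1: "1 \<le> s" unfolding s_def using T1 by simp
  have Ts: "real T = s * s" unfolding s_def by simp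
  have mH0: "0 < real m * H" using mH by simp
  have fA: "finite (alloc_grid m H \<alpha>)" and cA: "real (card (alloc_grid m H \<alpha>)) \<le> real T ^ 2 * H * real m + 2"
    using alloc_card[OF T \<alpha>_def H m] by auto
  have fP: "finite (price_grid m H \<alpha>)" and cP: "real (card (price_grid m H \<alpha>)) \<le> real m * H * real T + 1"
    using price_card[OF T \<alpha>_def] mH by auto
  have fX: "finite X" and cX: "card X \<le> card (alloc_grid m H \<alpha>) ^ (l * m) * card (price_grid m H \<alpha>) ^ l"
    using disc_card[OF fA fP] unfolding X_def by auto
  define Z :: menu where "Z = (\<lambda>j i. 0, \<lambda>j. 0)"
  have VZ: "valid_menu ud m l H Z" unfolding valid_menu_def Z_def using mH by auto
  have ZX: "Z \<in> X" unfolding X_def disc_menus_def alloc_grid_def price_grid_def using VZ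
    by (auto simp: Z_def intro!: exI[of _ "0::nat"] mH0[THEN less_imp_le])
  have XV: "valid_menu ud m l H M" if "M \<in> X" for M using that unfolding X_def disc_menus_def by auto
  have A0: "0 \<in> alloc_grid m H \<alpha>" unfolding alloc_grid_def by auto
  have P0: "0 \<in> price_grid m H \<alpha>" unfolding price_grid_def using mH0 by (auto intro!: exI[of _ "0::nat"])
  have cA1: "card (alloc_grid m H \<alpha>) \<ge> 1" using fA A0 by (metis One_nat_def Suc_leI card_gt_0_iff empty_iff)
  have cP1: "card (price_grid m H \<alpha>) \<ge> 1" using fP P0 by (metis One_nat_def Suc_leI card_gt_0_iff empty_iff)
  have cX1: "card X \<ge> 1" using fX ZX by (metis One_nat_def Suc_leI card_gt_0_iff empty_iff)
  define x where "x = real m * H * real l * real T"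
  have x1: "1 \<le> x" unfolding x_def using mult_mono[OF mult_mono[OF mH l1] T1] mH by simp
  have cA3: "real (card (alloc_grid m H \<alpha>)) \<le> 3 * x^2"
  proof -
    have "real T ^ 2 * H * real m \<le> x^2"
    proof -
      have "real T ^ 2 * H * real m * 1 \<le> real T ^ 2 * H * real m * (real m * H * real l ^ 2)"
      proof (intro mult_left_mono)
        have "1 \<le> real l * real l" using mult_mono[OF l1 l1] by simp
        from mult_mono[OF mH this] mH0 show "1 \<le> real m * H * real l ^ 2" by (simp add: power2_eq_square)
        show "0 \<le> real T ^ 2 * H * real m" using H by simp
      qed
      thus ?thesis unfolding x_def by (simp add: power2_eq_square algebra_simps)
    qed
    moreover have "1 \<le> x^2" using x1 by simp
    ultimately show ?thesis using cA by linarith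
  qed
  have cP3: "real (card (price_grid m H \<alpha>)) \<le> 3 * x^2"
  proof -
    have "real m * H * real T \<le> x" unfolding x_def
      using mult_right_mono[OF mult_left_mono[OF l1, of "real m * H"], of "real T"] mH T1 by simp
    moreover have "x \<le> x^2" using x1 by (simp add: power2_eq_square)
    moreover have "1 \<le> x^2" using x1 by simp
    ultimately show ?thesis using cP by linarith
  qed
  have L0: "0 \<le> L" unfolding L_def using x1 x_def by simp
  have ln3: "ln (3 * x^2) \<le> 2 * (1 + L)"
  proof -
    have "ln (3 * x^2) = ln 3 + 2 * ln x" using x1 by (simp add: ln_mult ln_realpow)
    moreover have "ln (3::real) \<le> 2"
    proof -
      have "ln (3::real) \<le> 3 - 1" by (rule ln_le_minus_one) auto
      thus ?thesis by simp
    qed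
    ultimately show ?thesis unfolding L_def x_def by simp
  qed
  have lnA: "ln (card (alloc_grid m H \<alpha>)) \<le> 2 * (1 + L)"
  proof -
    have "ln (card (alloc_grid m H \<alpha>)) \<le> ln (3 * x^2)"
      using cA3 cA1 x1 by (subst ln_le_cancel_iff) auto
    thus ?thesis using ln3 by simp
  qed
  have lnP: "ln (card (price_grid m H \<alpha>)) \<le> 2 * (1 + L)"
  proof -
    have "ln (card (price_grid m H \<alpha>)) \<le> ln (3 * x^2)"
      using cP3 cP1 x1 by (subst ln_le_cancel_iff) auto
    thus ?thesis using ln3 by simp
  qed
  have lnX: "ln (card X) \<le> 4 * real m * real l * (1 + L)"
  proof -
    have "real (card X) \<le> real (card (alloc_grid m H \<alpha>)) ^ (l * m) * real (card (price_grid m H \<alpha>)) ^ l"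
      using cX by (metis of_nat_le_iff of_nat_mult of_nat_power)
    hence "ln (card X) \<le> ln (real (card (alloc_grid m H \<alpha>)) ^ (l * m) * real (card (price_grid m H \<alpha>)) ^ l)"
      using cX1 by (subst ln_le_cancel_iff) auto
    also have "\<dots> = real (l * m) * ln (card (alloc_grid m H \<alpha>)) + real l * ln (card (price_grid m H \<alpha>))"
      using cA1 cP1 by (simp add: ln_mult ln_realpow)
    also have "\<dots> \<le> real (l * m) * (2 * (1 + L)) + real l * (2 * (1 + L))"
      using lnA lnP by (intro add_mono mult_left_mono) auto
    also have "\<dots> \<le> real (l * m) * (2 * (1 + L)) + real (l * m) * (2 * (1 + L))"
      using l1 m1 L0 by (intro add_mono mult_right_mono) auto
    finally show ?thesis by (simp add: algebra_simps)
  qed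
  define g where "g t M = revenue m l (vs t) M / (real m * H)" for t M
  have g01: "0 \<le> g t M \<and> g t M \<le> 1" if "M \<in> X" for t M
    using rev_bounds[OF XV[OF that], of "vs t"] H mH0 unfolding g_def by auto
  have b: "0 < \<beta>" "\<beta> \<le> 1" unfolding \<beta>_def using T1 by auto
  have prob: "wm_prob X m l H \<beta> vs t M = (1 + \<beta>) powr (\<Sum>s<t. g s M) / (\<Sum>M\<in>X. (1 + \<beta>) powr (\<Sum>s<t. g s M))"
    for t M unfolding wm_prob_def wm_weight_def cum_rev_def g_def by (simp add: sum_divide_distrib)
  have exp_eq: "wm_expected_revenue X m l H \<beta> vs T
      = real m * H * (\<Sum>t<T. \<Sum>M\<in>X. (1 + \<beta>) powr (\<Sum>s<t. g s M) / (\<Sum>M\<in>X. (1 + \<beta>) powr (\<Sum>s<t. g s M)) * g t M)"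
  proof -
    have tw: "p * revenue m l (vs t) M = real m * H * (p * g t M)" for p t M
      unfolding g_def using mH0 m H by (simp add: field_simps)
    show ?thesis unfolding wm_expected_revenue_def prob sum_distrib_left tw ..
  qed
  have wm: "R M0 \<le> wm_expected_revenue X m l H \<beta> vs T + real m * H * (\<beta> * T + ln (card X) / \<beta>)"
    if M0: "M0 \<in> X" for M0
  proof -
    have "(\<Sum>t<T. g t M0) \<le> (\<Sum>t<T. \<Sum>M\<in>X. (1 + \<beta>) powr (\<Sum>s<t. g s M) / (\<Sum>M\<in>X. (1 + \<beta>) powr (\<Sum>s<t. g s M)) * g t M)
        + \<beta> * T + ln (card X) / \<beta>"
      by (rule wm_bound[OF fX M0 _ b]) (use g01 in auto)
    hence "real m * H * (\<Sum>t<T. g t M0) \<le> real m * H * ((\<Sum>t<T. \<Sum>M\<in>X. (1 + \<beta>) powr (\<Sum>s<t. g s M) / (\<Sum>M\<in>X. (1 + \<beta>) powr (\<Sum>s<t. g s M)) * g t M)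
        + \<beta> * T + ln (card X) / \<beta>)" using mH0 by (intro mult_left_mono) auto
    moreover have "real m * H * (\<Sum>t<T. g t M0) = R M0"
      unfolding R_def g_def sum_distrib_left using mH0 m H by simp
    ultimately show ?thesis unfolding exp_eq by (simp add: algebra_simps)
  qed
  define B where "B = wm_expected_revenue X m l H \<beta> vs T + real m * H * (\<beta> * T + ln (card X) / \<beta>)
                    + real T * (6 * real m * H / sqrt (real T))"
  have allM: "R M \<le> B" if V: "valid_menu ud m l H M" for M
  proof -
    obtain M' where M': "M' \<in> X" and r: "\<forall>v. (\<forall>i<m. 0 \<le> v i \<and> v i \<le> H) \<longrightarrow>
           revenue m l v M \<le> revenue m l v M' + 6 * real m * H / sqrt (real T)"
      using disc_exists[OF V T H m] unfolding X_def \<alpha>_def by blast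
    have "R M \<le> (\<Sum>t<T. revenue m l (vs t) M' + 6 * real m * H / sqrt (real T))"
      unfolding R_def using r vs by (intro sum_mono) auto
    also have "\<dots> = R M' + real T * (6 * real m * H / sqrt (real T))"
      unfolding R_def by (simp add: sum.distrib)
    also have "\<dots> \<le> B" unfolding B_def using wm[OF M'] by simp
    finally show ?thesis .
  qed
  have opt: "opt_revenue ud m l H vs T \<le> B"
    unfolding opt_revenue_def
  proof (rule cSUP_least)
    show "{M. valid_menu ud m l H M} \<noteq> {}" using VZ by blast
    fix M assume "M \<in> {M. valid_menu ud m l H M}"
    thus "(\<Sum>t<T. revenue m l (vs t) M) \<le> B" using allM unfolding R_def by blast
  qed
  have reg: "wm_regret ud m l H vs T \<le> real m * H * (\<beta> * T + ln (card X) / \<beta>) + real T * (6 * real m * H / sqrt (real T))"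
    using opt unfolding wm_regret_def Let_def B_def X_def \<alpha>_def \<beta>_def by simp
  have bs: "\<beta> = 1 / s" unfolding \<beta>_def s_def ..
  have sq: "sqrt (real T) = s" unfolding s_def ..
  have e1: "\<beta> * T = s" using s1 by (simp add: bs Ts)
  have e2: "ln (card X) / \<beta> = s * ln (card X)" by (simp add: bs)
  have e3: "real T * (6 * real m * H / sqrt (real T)) = 6 * real m * H * s"
    using s1 by (simp add: sq Ts)
  have "wm_regret ud m l H vs T \<le> real m * H * s * (7 + ln (card X))"
    using reg e1 e2 e3 by (simp add: algebra_simps)
  also have "\<dots> \<le> real m * H * s * (7 * (real m * real l * (1 + L)) + 4 * real m * real l * (1 + L))"
  proof -
    have "1 \<le> real m * real l * (1 + L)" using mult_mono[OF mult_mono[OF m1 l1]] L0 by (simp add: order_trans[OF _ mult_mono])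
    hence "7 + ln (card X) \<le> 7 * (real m * real l * (1 + L)) + 4 * real m * real l * (1 + L)" using lnX by linarith
    thus ?thesis using mH0 s1 by (intro mult_left_mono) auto
  qed
  also have "\<dots> = 11 * real m ^ 2 * H * real l * sqrt (real T) * (1 + ln (real m * H * real l * real T)) ^ 1"
    unfolding L_def s_def by (simp add: algebra_simps power2_eq_square)
  finally show "wm_regret ud m l H vs T \<le> 11 * real m ^ 2 * H * real l * sqrt (real T) * (1 + ln (real m * H * real l * real T)) ^ 1" .
qed


end
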